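(* Let $D=\{x\in\mathbb{R}^2:\|x\|<1\}$ be the open unit disk. Consider the decomposition of $D$ given by an inscribed equilateral triangle: the four pieces are the closed triangle intersected with $D$ and the three closed circular segments cut off by its sides, intersected with $D$; each of these has diameter $\sqrt{3}$, and at most two of them meet at any point of $D$. Then this decomposition has least diameter among all smooth decompositions of $D$ into relatively closed sets meeting at most two at a point: that is, every smooth decomposition of $D$ into relatively closed subsets of $D$ with pairwise disjoint interiors, such that no point of $D$ lies in three or more pieces, has a piece of diameter at least $\sqrt{3}$.
   Context: A decomposition of $D$ is a locally finite collection of relatively closed subsets of $D$ (pieces) with pairwise disjoint interiors whose union is $D$; it is smooth if the pieces are bounded by smooth curves. Diameters are Euclidean. *)

theory Defs
  imports "HOL-Analysis.Analysis"
begin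

definition decomposition :: "(real^2) set \<Rightarrow> (real^2) set set \<Rightarrow> bool" where
  "decomposition D \<P> \<longleftrightarrow>
     (\<forall>P\<in>\<P>. closedin (top_of_set D) P) \<and>
     (\<forall>P\<in>\<P>. \<forall>Q\<in>\<P>. P \<noteq> Q \<longrightarrow> interior P \<inter> interior Q = {}) \<and>
     \<Union>\<P> = D \<and>
     (\<forall>x\<in>D. \<exists>U. open U \<and> x \<in> U \<and> finite {P\<in>\<P>. P \<inter> U \<noteq> {}})"

definition smooth_curve :: "(real \<Rightarrow> real^2) \<Rightarrow> bool" where
  "smooth_curve g \<longleftrightarrow> g C1_differentiable_on {0..1} \<and>
     (\<forall>t\<in>{0..1}. vector_derivative g (at t within {0..1}) \<noteq> 0)"

definition smooth_decomposition :: "(real^2) set \<Rightarrow> (real^2) set set \<Rightarrow> bool" where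
  "smooth_decomposition D \<P> \<longleftrightarrow> decomposition D \<P> \<and>
     (\<forall>P\<in>\<P>. \<exists>C. (\<forall>g\<in>C. smooth_curve g) \<and>
        (\<forall>x\<in>D. \<exists>U. open U \<and> x \<in> U \<and> finite {g\<in>C. path_image g \<inter> U \<noteq> {}}) \<and>
        D \<inter> frontier P = D \<inter> \<Union>(path_image ` C))"

definition at_most_two_meet :: "(real^2) set \<Rightarrow> (real^2) set set \<Rightarrow> bool" where
  "at_most_two_meet D \<P> \<longleftrightarrow>
     \<not> (\<exists>x\<in>D. \<exists>P\<in>\<P>. \<exists>Q\<in>\<P>. \<exists>R\<in>\<P>. P \<noteq> Q \<and> P \<noteq> R \<and> Q \<noteq> R \<and> x \<in> P \<and> x \<in> Q \<and> x \<in> R)"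

definition unit_disk :: "(real^2) set" where
  "unit_disk = ball 0 1"

definition tri_vertices :: "(real^2) set" where
  "tri_vertices = {vector [1, 0], vector [-1/2, sqrt 3 / 2], vector [-1/2, - sqrt 3 / 2]}"

text \<open>The closed circular segment cut off by the side opposite vertex v is
  the part of the closed unit disk on the far side of that side, i.e. {x. x \<bullet> (-v) \<ge> 1/2}.\<close>
definition triangle_decomposition :: "(real^2) set set" where
  "triangle_decomposition =
     insert (unit_disk \<inter> convex hull tri_vertices)
       ((\<lambda>v. unit_disk \<inter> (cball 0 1 \<inter> {x. x \<bullet> (- v) \<ge> 1/2})) ` tri_vertices)"

end

theory Submission
  imports Defs
begin


definition vA :: "real^2" where "vA = vector [1, 0]"
definition vB :: "real^2" where "vB = vector [-1/2, sqrt 3 / 2]"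
definition vC :: "real^2" where "vC = vector [-1/2, - sqrt 3 / 2]"

lemma tri_vertices_eq: "tri_vertices = {vA, vB, vC}"
  by (simp add: tri_vertices_def vA_def vB_def vC_def)

definition lam :: "real^2 \<Rightarrow> real^2 \<Rightarrow> real" where "lam v x = (1 + 2 * (x \<bullet> v)) / 3"

definition tri3 :: "real^2 \<Rightarrow> real^2 \<Rightarrow> real^2 \<Rightarrow> bool" where
  "tri3 a b c \<longleftrightarrow> norm a = 1 \<and> norm b = 1 \<and> norm c = 1 \<and> a \<bullet> b = -1/2 \<and> b \<bullet> c = -1/2 \<and> a \<bullet> c = -1/2
     \<and> a + b + c = 0 \<and> (\<forall>x. x = lam a x *\<^sub>R a + lam b x *\<^sub>R b + lam c x *\<^sub>R c)"

lemma tri3_rot: "tri3 a b c \<Longrightarrow> tri3 b c a"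
  unfolding tri3_def by (simp add: inner_commute add_ac)

lemma tri3_swap: "tri3 a b c \<Longrightarrow> tri3 b a c"
  unfolding tri3_def by (simp add: inner_commute add_ac)

lemma sqrt3_sq: "sqrt 3 * sqrt 3 = (3::real)" by simp

lemma tri3_ABC: "tri3 vA vB vC"
proof -
  have n: "norm vA = 1" "norm vB = 1" "norm vC = 1"
    by (simp_all add: vA_def vB_def vC_def norm_vec_def L2_set_def sum_2 power2_eq_square)
  have i: "vA \<bullet> vB = -1/2" "vB \<bullet> vC = -1/2" "vA \<bullet> vC = -1/2"
    by (simp_all add: vA_def vB_def vC_def inner_vec_def sum_2)
  have s: "vA + vB + vC = 0"
    by (simp add: vA_def vB_def vC_def vec_eq_iff forall_2)
  have f: "x = lam vA x *\<^sub>R vA + lam vB x *\<^sub>R vB + lam vC x *\<^sub>R vC" for x :: "real^2"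
  proof -
    have "x$1 = lam vA x * 1 + lam vB x * (-1/2) + lam vC x * (-1/2)"
      by (simp add: lam_def vA_def vB_def vC_def inner_vec_def sum_2 field_simps)
    moreover have "x$2 = lam vA x * 0 + lam vB x * (sqrt 3/2) + lam vC x * (- sqrt 3/2)"
    proof -
      have "lam vA x * 0 + lam vB x * (sqrt 3/2) + lam vC x * (- sqrt 3/2) = (sqrt 3 * sqrt 3) * x$2 / 3"
        by (simp add: lam_def vA_def vB_def vC_def inner_vec_def sum_2 field_simps)
      thus ?thesis by simp
    qed
    ultimately show ?thesis by (simp add: vec_eq_iff forall_2 vA_def vB_def vC_def)
  qed
  show ?thesis unfolding tri3_def using n i s f by blast
qed


definition Hs :: "real^2 \<Rightarrow> real^2 \<Rightarrow> real^2 \<Rightarrow> (real^2) set" where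
  "Hs a b c = {x. -1/2 \<le> a \<bullet> x} \<inter> {x. -1/2 \<le> b \<bullet> x} \<inter> {x. -1/2 \<le> c \<bullet> x}"

lemma tri3_self: "tri3 a b c \<Longrightarrow> a \<bullet> a = 1 \<and> b \<bullet> b = 1 \<and> c \<bullet> c = 1"
  unfolding tri3_def by (metis inner_real_def norm_eq_sqrt_inner real_sqrt_eq_1_iff)

lemma tri3_frame: "tri3 a b c \<Longrightarrow> x = lam a x *\<^sub>R a + lam b x *\<^sub>R b + lam c x *\<^sub>R c"
  unfolding tri3_def by blast

lemma tri3_sum0: "tri3 a b c \<Longrightarrow> x \<bullet> a + x \<bullet> b + x \<bullet> c = 0"
proof -
  assume t: "tri3 a b c"
  hence "a + b + c = 0" by (simp add: tri3_def)
  hence "x \<bullet> (a + b + c) = 0" by simp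
  thus ?thesis by (simp add: inner_add_right)
qed

lemma lam_sum: "tri3 a b c \<Longrightarrow> lam a x + lam b x + lam c x = 1"
  using tri3_sum0[of a b c x] by (simp add: lam_def field_simps)

lemma tri3_conv: assumes t: "tri3 a b c" shows "convex hull {a,b,c} = Hs a b c"
proof
  have in3: "{a,b,c} \<subseteq> Hs a b c" using t tri3_self[OF t] by (auto simp: Hs_def tri3_def inner_commute)
  have "convex (Hs a b c)" unfolding Hs_def by (intro convex_Int convex_halfspace_ge)
  thus "convex hull {a,b,c} \<subseteq> Hs a b c" using in3 by (rule hull_minimal[rotated])
next
  show "Hs a b c \<subseteq> convex hull {a,b,c}"
  proof
    fix x assume x: "x \<in> Hs a b c"
    have nn: "0 \<le> lam a x" "0 \<le> lam b x" "0 \<le> lam c x" using x by (auto simp: Hs_def lam_def inner_commute)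
    show "x \<in> convex hull {a,b,c}" unfolding convex_hull_3
      using nn lam_sum[OF t, of x] tri3_frame[OF t, of x] by blast
  qed
qed

lemma tri3_seg: assumes t: "tri3 a b c" shows "closed_segment b c = Hs a b c \<inter> {x. a \<bullet> x = -1/2}"
proof
  have sf: "a \<bullet> a = 1" "b \<bullet> b = 1" "c \<bullet> c = 1" using tri3_self[OF t] by auto
  have ip: "a \<bullet> b = -1/2" "b \<bullet> c = -1/2" "a \<bullet> c = -1/2" using t by (auto simp: tri3_def)
  show "closed_segment b c \<subseteq> Hs a b c \<inter> {x. a \<bullet> x = -1/2}"
  proof
    fix x assume "x \<in> closed_segment b c"
    then obtain u where u: "0 \<le> u" "u \<le> 1" "x = (1 - u) *\<^sub>R b + u *\<^sub>R c" by (auto simp: closed_segment_def)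
    have "a \<bullet> x = -1/2" using ip by (simp add: u(3) inner_add_right algebra_simps)
    moreover have "b \<bullet> x = 1 - 3/2 * u" using ip sf by (simp add: u(3) inner_add_right algebra_simps)
    moreover have "c \<bullet> x = -1/2 + 3/2 * u" using ip sf by (simp add: u(3) inner_add_right algebra_simps inner_commute)
    ultimately show "x \<in> Hs a b c \<inter> {x. a \<bullet> x = -1/2}" using u by (auto simp: Hs_def)
  qed
next
  show "Hs a b c \<inter> {x. a \<bullet> x = -1/2} \<subseteq> closed_segment b c"
  proof
    fix x assume x: "x \<in> Hs a b c \<inter> {x. a \<bullet> x = -1/2}"
    have la: "lam a x = 0" using x by (simp add: lam_def inner_commute)
    have nn: "0 \<le> lam b x" "0 \<le> lam c x" using x by (auto simp: Hs_def lam_def inner_commute)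
    have sm: "lam b x = 1 - lam c x" using lam_sum[OF t, of x] la by simp
    have "x = (1 - lam c x) *\<^sub>R b + lam c x *\<^sub>R c" using tri3_frame[OF t, of x] la sm by simp
    moreover have "lam c x \<le> 1" using nn sm by simp
    ultimately show "x \<in> closed_segment b c" using nn unfolding closed_segment_def by blast
  qed
qed

lemma tri3_chord: assumes t: "tri3 a b c" shows "ball 0 1 \<inter> {x. a \<bullet> x = -1/2} \<subseteq> closed_segment b c"
proof
  fix x assume x: "x \<in> ball 0 1 \<inter> {x. a \<bullet> x = -1/2}"
  have sf: "b \<bullet> b = 1" "c \<bullet> c = 1" using tri3_self[OF t] by auto
  have ip: "b \<bullet> c = -1/2" using t by (auto simp: tri3_def)
  have la: "lam a x = 0" using x by (simp add: lam_def inner_commute)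
  define lb where "lb = lam b x"
  define lc where "lc = lam c x"
  have sm: "lb + lc = 1" using lam_sum[OF t, of x] la by (simp add: lb_def lc_def)
  have xe: "x = lb *\<^sub>R b + lc *\<^sub>R c" using tri3_frame[OF t, of x] la by (simp add: lb_def lc_def)
  have "x \<bullet> x = lb * lb * (b \<bullet> b) + 2 * lb * lc * (b \<bullet> c) + lc * lc * (c \<bullet> c)"
    by (subst (1 2) xe) (simp add: inner_add_left inner_add_right inner_commute algebra_simps)
  also have "\<dots> = (lb + lc) * (lb + lc) - 3 * lb * lc" using sf ip by (simp add: algebra_simps)
  also have "\<dots> = 1 - 3 * lb * lc" using sm by simp
  finally have xx: "x \<bullet> x = 1 - 3 * lb * lc" .
  have nx: "norm x < 1" using x by simp
  have "norm x * norm x \<le> norm x" using nx by (intro mult_left_le) auto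
  hence "x \<bullet> x < 1" using nx by (simp add: norm_eq_sqrt_inner)
  hence pos: "lb * lc > 0" using xx by simp
  have "lb > 0"
  proof (rule ccontr)
    assume "\<not> lb > 0"
    hence "lb \<le> 0" by simp
    moreover have "lc \<ge> 0" using \<open>lb \<le> 0\<close> sm by simp
    ultimately have "lb * lc \<le> 0" by (simp add: mult_nonpos_nonneg)
    thus False using pos by simp
  qed
  have "lc > 0"
  proof (rule ccontr)
    assume "\<not> lc > 0"
    hence "lc \<le> 0" by simp
    moreover have "lb \<ge> 0" using \<open>lc \<le> 0\<close> sm by simp
    ultimately have "lb * lc \<le> 0" by (simp add: mult_nonneg_nonpos)
    thus False using pos by simp
  qed
  hence "x \<in> Hs a b c" using \<open>lb > 0\<close> x by (auto simp: Hs_def lb_def lc_def lam_def inner_commute)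
  thus "x \<in> closed_segment b c" using tri3_seg[OF t] x by blast
qed


lemma caps_disj:
  assumes t: "tri3 a b c" and x: "norm x < 1" "a \<bullet> x \<le> -1/2" "b \<bullet> x \<le> -1/2"
  shows False
proof -
  have "a + b + c = 0" "norm c = 1" using t by (auto simp: tri3_def)
  hence "c = - (a + b)" by (metis add.commute eq_neg_iff_add_eq_0)
  hence "c \<bullet> x = - (a \<bullet> x) - (b \<bullet> x)" by (simp add: inner_diff_left inner_minus_left)
  hence "c \<bullet> x \<ge> 1" using x by simp
  moreover have "c \<bullet> x \<le> norm c * norm x" by (rule norm_cauchy_schwarz)
  ultimately show False using x \<open>norm c = 1\<close> by simp
qed

lemma norm_perp:
  fixes a z :: "real^2"
  assumes "norm a = 1"
  shows "(norm z)^2 = (a \<bullet> z)^2 + (vector [-(a$2), a$1] \<bullet> z)^2"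
proof -
  have a: "a$1^2 + a$2^2 = 1" using assms by (simp add: norm_vec_def L2_set_def sum_2)
  have "(a \<bullet> z)^2 + (vector [-(a$2), a$1] \<bullet> z)^2 = (a$1^2 + a$2^2) * (z$1^2 + z$2^2)"
    by (simp add: inner_vec_def sum_2 power2_eq_square algebra_simps)
  also have "\<dots> = (norm z)^2" using a by (simp add: norm_vec_def L2_set_def sum_2)
  finally show ?thesis by simp
qed

lemma cap_dist:
  fixes a x y :: "real^2"
  assumes a: "norm a = 1" and x: "norm x \<le> 1" "a \<bullet> x \<le> -1/2" and y: "norm y \<le> 1" "a \<bullet> y \<le> -1/2"
  shows "dist x y \<le> sqrt 3"
proof -
  define p :: "real^2" where "p = vector [-(a$2), a$1]"
  define \<alpha> where "\<alpha> = - (a \<bullet> x)"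
  define \<alpha>' where "\<alpha>' = - (a \<bullet> y)"
  define \<beta> where "\<beta> = p \<bullet> x"
  define \<beta>' where "\<beta>' = p \<bullet> y"
  have nx: "(norm x)^2 = \<alpha>^2 + \<beta>^2" using norm_perp[OF a, of x] by (simp add: \<alpha>_def \<beta>_def p_def)
  have ny: "(norm y)^2 = \<alpha>'^2 + \<beta>'^2" using norm_perp[OF a, of y] by (simp add: \<alpha>'_def \<beta>'_def p_def)
  have nxy: "(norm (x - y))^2 = (\<alpha> - \<alpha>')^2 + (\<beta> - \<beta>')^2"
    using norm_perp[OF a, of "x - y"] by (simp add: \<alpha>_def \<beta>_def \<alpha>'_def \<beta>'_def p_def inner_diff_right power2_eq_square algebra_simps)
  have "(norm x)^2 \<le> 1" "(norm y)^2 \<le> 1" using x y by (simp_all add: power_le_one)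
  hence b1: "\<beta>^2 \<le> 1 - \<alpha>^2" "\<beta>'^2 \<le> 1 - \<alpha>'^2" using nx ny by simp_all
  have "(\<beta> - \<beta>')^2 \<le> 2 * \<beta>^2 + 2 * \<beta>'^2"
  proof -
    have "2 * \<beta>^2 + 2 * \<beta>'^2 - (\<beta> - \<beta>')^2 = (\<beta> + \<beta>')^2" by (simp add: power2_eq_square algebra_simps)
    thus ?thesis by (metis diff_ge_0_iff_ge zero_le_power2)
  qed
  hence "(norm (x - y))^2 \<le> (\<alpha> - \<alpha>')^2 + 2 * (1 - \<alpha>^2) + 2 * (1 - \<alpha>'^2)" using nxy b1 by argo
  also have "\<dots> = 4 - (\<alpha> + \<alpha>')^2" by (simp add: power2_eq_square algebra_simps)
  also have "(\<alpha> + \<alpha>')^2 \<ge> 1"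
  proof -
    have "\<alpha> + \<alpha>' \<ge> 1" using x y by (simp add: \<alpha>_def \<alpha>'_def)
    thus ?thesis by (simp add: one_le_power)
  qed
  hence "4 - (\<alpha> + \<alpha>')^2 \<le> 3" by simp
  finally have "(norm (x - y))^2 \<le> 3" .
  hence "sqrt ((norm (x - y))^2) \<le> sqrt 3" by (rule real_sqrt_le_mono)
  thus ?thesis by (simp add: dist_norm)
qed

lemma chord_pt:
  assumes t: "tri3 a b c" and tt: "0 < t" "t < 1"
  shows "norm ((1 - t) *\<^sub>R b + t *\<^sub>R c) < 1" "a \<bullet> ((1 - t) *\<^sub>R b + t *\<^sub>R c) = -1/2"
    "(1 - t) *\<^sub>R b + t *\<^sub>R c \<in> closed_segment b c"
proof -
  have sf: "b \<bullet> b = 1" "c \<bullet> c = 1" using tri3_self[OF t] by auto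
  have ip: "b \<bullet> c = -1/2" "a \<bullet> b = -1/2" "a \<bullet> c = -1/2" using t by (auto simp: tri3_def)
  define q where "q = (1 - t) *\<^sub>R b + t *\<^sub>R c"
  have "q \<bullet> q = (1-t) * (1-t) * (b \<bullet> b) + 2 * (1-t) * t * (b \<bullet> c) + t * t * (c \<bullet> c)"
    by (simp add: q_def inner_add_left inner_add_right inner_commute algebra_simps)
  also have "\<dots> = 1 - 3 * t * (1 - t)" using sf ip by (simp add: algebra_simps)
  finally have qq: "q \<bullet> q = 1 - 3 * t * (1 - t)" .
  have "t * (1 - t) > 0" using tt by simp
  hence "q \<bullet> q < 1" using qq by simp
  hence "sqrt (q \<bullet> q) < 1" by simp
  thus "norm ((1 - t) *\<^sub>R b + t *\<^sub>R c) < 1" by (simp add: q_def norm_eq_sqrt_inner)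
  show "a \<bullet> ((1 - t) *\<^sub>R b + t *\<^sub>R c) = -1/2" using ip by (simp add: inner_add_right algebra_simps)
  show "(1 - t) *\<^sub>R b + t *\<^sub>R c \<in> closed_segment b c" using tt unfolding closed_segment_def by auto
qed

lemma chord_dist:
  assumes t: "tri3 a b c"
  shows "dist ((1 - t) *\<^sub>R b + t *\<^sub>R c) (t *\<^sub>R b + (1 - t) *\<^sub>R c) = \<bar>1 - 2 * t\<bar> * sqrt 3"
proof -
  have sf: "b \<bullet> b = 1" "c \<bullet> c = 1" using tri3_self[OF t] by auto
  have ip: "b \<bullet> c = -1/2" using t by (auto simp: tri3_def)
  have e: "((1 - t) *\<^sub>R b + t *\<^sub>R c) - (t *\<^sub>R b + (1 - t) *\<^sub>R c) = (1 - 2 * t) *\<^sub>R (b - c)"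
    by (simp add: vec_eq_iff algebra_simps)
  have "(b - c) \<bullet> (b - c) = 3" using sf ip by (simp add: inner_diff_left inner_diff_right inner_commute)
  hence "norm (b - c) = sqrt 3" by (simp add: norm_eq_sqrt_inner)
  thus ?thesis by (simp add: dist_norm e)
qed

lemma diam_ge_lemma:
  fixes d :: real
  assumes "0 \<le> d" and h: "\<And>t. 0 < t \<Longrightarrow> t < 1/2 \<Longrightarrow> (1 - 2 * t) * sqrt 3 \<le> d"
  shows "sqrt 3 \<le> d"
proof (rule ccontr)
  assume "\<not> sqrt 3 \<le> d"
  hence dl: "d < sqrt 3" by simp
  define t where "t = (sqrt 3 - d) / (4 * sqrt 3)"
  have s0: "sqrt 3 > 0" by simp
  have t0: "0 < t" using dl s0 by (simp add: t_def)
  have t1: "t < 1/2" using dl s0 assms(1) by (simp add: t_def field_simps)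
  have "(1 - 2 * t) * sqrt 3 = (sqrt 3 + d) / 2" using s0 by (simp add: t_def field_simps)
  hence "(sqrt 3 + d) / 2 \<le> d" using h[OF t0 t1] by simp
  thus False using dl by simp
qed


lemma tri3_dist_ab: "tri3 a b c \<Longrightarrow> norm (a - b) = sqrt 3"
proof -
  assume t: "tri3 a b c"
  have "a \<bullet> a = 1" "b \<bullet> b = 1" "a \<bullet> b = -1/2" using tri3_self[OF t] t by (auto simp: tri3_def)
  hence "(a - b) \<bullet> (a - b) = 3" by (simp add: inner_diff_left inner_diff_right inner_commute)
  thus ?thesis by (simp add: norm_eq_sqrt_inner)
qed

lemma vert_distinct: "vA \<noteq> vB" "vB \<noteq> vC" "vA \<noteq> vC"
  by (simp_all add: vA_def vB_def vC_def vec_eq_iff forall_2)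

lemma tri_vw:
  assumes "v \<in> tri_vertices" "w \<in> tri_vertices" "v \<noteq> w"
  shows "\<exists>c. tri3 v w c"
proof -
  have t1: "tri3 vA vB vC" by (rule tri3_ABC)
  have t2: "tri3 vB vC vA" by (rule tri3_rot[OF t1])
  have t3: "tri3 vC vA vB" by (rule tri3_rot[OF t2])
  have t4: "tri3 vB vA vC" by (rule tri3_swap[OF t1])
  have t5: "tri3 vC vB vA" by (rule tri3_swap[OF t2])
  have t6: "tri3 vA vC vB" by (rule tri3_swap[OF t3])
  show ?thesis using assms t1 t2 t3 t4 t5 t6 by (auto simp: tri_vertices_eq)
qed

lemma tri_v: "v \<in> tri_vertices \<Longrightarrow> \<exists>b c. tri3 v b c"
proof -
  assume v: "v \<in> tri_vertices"
  have "\<exists>w\<in>tri_vertices. w \<noteq> v" using vert_distinct by (auto simp: tri_vertices_eq)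
  then obtain w where "w \<in> tri_vertices" "w \<noteq> v" by blast
  thus ?thesis using tri_vw[OF v] by blast
qed

lemma tri_norm: "v \<in> tri_vertices \<Longrightarrow> norm v = 1"
  using tri_v by (auto simp: tri3_def)

lemma tri_nz: "v \<in> tri_vertices \<Longrightarrow> v \<noteq> 0"
  using tri_norm by force

definition PT0 :: "(real^2) set" where "PT0 = ball 0 1 \<inter> Hs vA vB vC"
definition capf :: "real^2 \<Rightarrow> (real^2) set" where "capf v = ball 0 1 \<inter> {x. v \<bullet> x \<le> -1/2}"

lemma td_eq: "triangle_decomposition = insert PT0 (capf ` tri_vertices)"
proof -
  have "convex hull tri_vertices = Hs vA vB vC" by (simp add: tri_vertices_eq tri3_conv[OF tri3_ABC])
  moreover have "unit_disk \<inter> (cball 0 1 \<inter> {x. x \<bullet> (- v) \<ge> 1/2}) = capf v" for v :: "real^2"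
    by (auto simp: unit_disk_def capf_def inner_commute)
  ultimately show ?thesis by (simp add: triangle_decomposition_def PT0_def unit_disk_def)
qed

lemma Hs_sub: "v \<in> tri_vertices \<Longrightarrow> Hs vA vB vC \<subseteq> {x. -1/2 \<le> v \<bullet> x}"
  by (auto simp: tri_vertices_eq Hs_def)

lemma caps2: assumes "v \<in> tri_vertices" "w \<in> tri_vertices" "capf v \<noteq> capf w" "x \<in> capf v" "x \<in> capf w"
  shows False
proof -
  have "v \<noteq> w" using assms(3) by blast
  then obtain c where "tri3 v w c" using tri_vw assms(1,2) by blast
  thus False using caps_disj[of v w c x] assms(4,5) by (auto simp: capf_def)
qed

lemma front_open:
  assumes "open D" shows "D \<inter> frontier (D \<inter> A) = D \<inter> frontier A"
proof -
  have i: "interior (D \<inter> A) = D \<inter> interior A" using assms by (simp add: interior_open)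
  have c1: "D \<inter> closure (D \<inter> A) \<subseteq> D \<inter> closure A" using closure_mono[of "D \<inter> A" A] by blast
  have c2: "D \<inter> closure A \<subseteq> D \<inter> closure (D \<inter> A)" using open_Int_closure_subset[OF assms, of A] by blast
  show ?thesis unfolding frontier_def i using c1 c2 by blast
qed

lemma Hs_closed: "closed (Hs a b c)"
  unfolding Hs_def by (intro closed_Int closed_halfspace_ge)

lemma frontier_Hs:
  assumes "a \<noteq> 0" "b \<noteq> 0" "c \<noteq> 0"
  shows "frontier (Hs a b c) = Hs a b c \<inter> ({x. a \<bullet> x = -1/2} \<union> {x. b \<bullet> x = -1/2} \<union> {x. c \<bullet> x = -1/2})"
proof -
  have "interior (Hs a b c) = {x. -1/2 < a \<bullet> x} \<inter> {x. -1/2 < b \<bullet> x} \<inter> {x. -1/2 < c \<bullet> x}"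
    using assms by (simp add: Hs_def)
  moreover have "closure (Hs a b c) = Hs a b c" using Hs_closed by simp
  ultimately show ?thesis unfolding frontier_def by (auto simp: Hs_def)
qed

lemma Hs_rot: "Hs a b c = Hs b c a" by (auto simp: Hs_def)
lemma Hs_rot2: "Hs a b c = Hs c a b" by (auto simp: Hs_def)

lemma linepath_smooth: "a \<noteq> b \<Longrightarrow> smooth_curve (linepath a b)"
  unfolding smooth_curve_def
proof (intro conjI ballI)
  show "linepath a b C1_differentiable_on {0..1}"
    unfolding linepath_def by (intro C1_differentiable_on_add C1_differentiable_on_scaleR C1_differentiable_on_diff C1_differentiable_on_const C1_differentiable_on_ident)
  fix t :: real assume "t \<in> {0..1}" "a \<noteq> b"
  thus "vector_derivative (linepath a b) (at t within {0..1}) \<noteq> 0"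
    by (simp add: vector_derivative_linepath_within)
qed


lemma td_finite: "finite triangle_decomposition"
  by (simp add: td_eq tri_vertices_eq)

lemma int_T_cap: assumes v: "v \<in> tri_vertices" shows "interior PT0 \<inter> interior (capf v) = {}"
proof -
  have "interior PT0 \<subseteq> interior {x. -1/2 \<le> v \<bullet> x}"
    using Hs_sub[OF v] by (intro interior_mono) (auto simp: PT0_def)
  also have "\<dots> = {x. -1/2 < v \<bullet> x}" using tri_nz[OF v] by simp
  finally have 1: "interior PT0 \<subseteq> {x. -1/2 < v \<bullet> x}" .
  have "interior (capf v) \<subseteq> interior {x. v \<bullet> x \<le> -1/2}"
    by (intro interior_mono) (auto simp: capf_def)
  also have "\<dots> = {x. v \<bullet> x < -1/2}" using tri_nz[OF v] by simp
  finally have 2: "interior (capf v) \<subseteq> {x. v \<bullet> x < -1/2}" .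
  show ?thesis using 1 2 by fastforce
qed

lemma int_cap_cap: assumes "v \<in> tri_vertices" "w \<in> tri_vertices" "capf v \<noteq> capf w"
  shows "interior (capf v) \<inter> interior (capf w) = {}"
  using caps2[OF assms] interior_subset[of "capf v"] interior_subset[of "capf w"] by blast

lemma td_decomp: "decomposition unit_disk triangle_decomposition"
  unfolding decomposition_def
proof (intro conjI)
  show "\<forall>P\<in>triangle_decomposition. closedin (top_of_set unit_disk) P"
    unfolding td_eq unit_disk_def PT0_def capf_def
    by (auto intro!: closedin_closed_Int Hs_closed closed_halfspace_le)
  show "\<forall>P\<in>triangle_decomposition. \<forall>Q\<in>triangle_decomposition. P \<noteq> Q \<longrightarrow> interior P \<inter> interior Q = {}"
    unfolding td_eq using int_T_cap int_cap_cap by blast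
  show "\<Union>triangle_decomposition = unit_disk"
  proof
    show "\<Union>triangle_decomposition \<subseteq> unit_disk" unfolding td_eq unit_disk_def PT0_def capf_def by blast
    show "unit_disk \<subseteq> \<Union>triangle_decomposition"
    proof
      fix x assume x: "x \<in> unit_disk"
      show "x \<in> \<Union>triangle_decomposition"
      proof (cases "x \<in> Hs vA vB vC")
        case True
        hence "x \<in> PT0" using x by (simp add: PT0_def unit_disk_def)
        thus ?thesis by (simp add: td_eq)
      next
        case False
        then obtain v where v: "v \<in> tri_vertices" "v \<bullet> x < -1/2"
          by (auto simp: Hs_def tri_vertices_eq not_le)
        hence "x \<in> capf v" using x by (simp add: capf_def unit_disk_def)
        thus ?thesis using v by (auto simp: td_eq)
      qed
    qed
  qed
  show "\<forall>x\<in>unit_disk. \<exists>U. open U \<and> x \<in> U \<and> finite {P\<in>triangle_decomposition. P \<inter> U \<noteq> {}}"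
    using td_finite by (intro ballI exI[of _ UNIV]) auto
qed

lemma td_two: "at_most_two_meet unit_disk triangle_decomposition"
  unfolding at_most_two_meet_def
proof
  assume "\<exists>x\<in>unit_disk. \<exists>P\<in>triangle_decomposition. \<exists>Q\<in>triangle_decomposition. \<exists>R\<in>triangle_decomposition.
      P \<noteq> Q \<and> P \<noteq> R \<and> Q \<noteq> R \<and> x \<in> P \<and> x \<in> Q \<and> x \<in> R"
  then obtain x P Q R where h: "P \<in> triangle_decomposition" "Q \<in> triangle_decomposition" "R \<in> triangle_decomposition"
    "P \<noteq> Q" "P \<noteq> R" "Q \<noteq> R" "x \<in> P" "x \<in> Q" "x \<in> R" by blast
  have c: "\<And>S. S \<in> triangle_decomposition \<Longrightarrow> S \<noteq> PT0 \<Longrightarrow> \<exists>v\<in>tri_vertices. S = capf v"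
    by (auto simp: td_eq)
  show False
  proof (cases "P = PT0")
    case True
    obtain v w where "v \<in> tri_vertices" "Q = capf v" "w \<in> tri_vertices" "R = capf w"
      using c[OF h(2)] c[OF h(3)] h True by metis
    thus False using caps2 h by blast
  next
    case False
    obtain v where v: "v \<in> tri_vertices" "P = capf v" using c[OF h(1) False] by blast
    show False
    proof (cases "Q = PT0")
      case True
      obtain w where "w \<in> tri_vertices" "R = capf w" using c[OF h(3)] h True by metis
      thus False using caps2 h v by blast
    next
      case False
      obtain w where "w \<in> tri_vertices" "Q = capf w" using c[OF h(2) False] by blast
      thus False using caps2 h v by blast
    qed
  qed
qed

lemma td_smooth: "smooth_decomposition unit_disk triangle_decomposition"
  unfolding smooth_decomposition_def
proof (intro conjI td_decomp ballI)
  fix P assume "P \<in> triangle_decomposition"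
  hence P: "P = PT0 \<or> (\<exists>v\<in>tri_vertices. P = capf v)" by (auto simp: td_eq)
  have opn: "open unit_disk" by (simp add: unit_disk_def)
  show "\<exists>C. (\<forall>g\<in>C. smooth_curve g) \<and>
        (\<forall>x\<in>unit_disk. \<exists>U. open U \<and> x \<in> U \<and> finite {g\<in>C. path_image g \<inter> U \<noteq> {}}) \<and>
        unit_disk \<inter> frontier P = unit_disk \<inter> \<Union>(path_image ` C)"
  proof (cases "P = PT0")
    case True
    define C where "C = {linepath vA vB, linepath vB vC, linepath vC vA}"
    have t1: "tri3 vA vB vC" by (rule tri3_ABC)
    have t2: "tri3 vB vC vA" by (rule tri3_rot[OF t1])
    have t3: "tri3 vC vA vB" by (rule tri3_rot[OF t2])
    have sm: "\<forall>g\<in>C. smooth_curve g" using vert_distinct by (auto simp: C_def intro!: linepath_smooth)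
    have lf: "\<forall>x\<in>unit_disk. \<exists>U. open U \<and> x \<in> U \<and> finite {g\<in>C. path_image g \<inter> U \<noteq> {}}"
      by (intro ballI exI[of _ UNIV]) (auto simp: C_def)
    have "\<Union>(path_image ` C) = closed_segment vA vB \<union> closed_segment vB vC \<union> closed_segment vC vA"
      by (auto simp: C_def)
    also have "\<dots> = Hs vA vB vC \<inter> ({x. vA \<bullet> x = -1/2} \<union> {x. vB \<bullet> x = -1/2} \<union> {x. vC \<bullet> x = -1/2})"
      unfolding tri3_seg[OF t1] tri3_seg[OF t2] tri3_seg[OF t3] Hs_rot[of vA vB vC] Hs_rot2[of vA vB vC]
      by (auto simp: Hs_rot[of vB vC vA] Hs_def)
    also have "\<dots> = frontier (Hs vA vB vC)"
      using vert_distinct tri_nz by (intro frontier_Hs[symmetric]) (auto simp: tri_vertices_eq)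
    finally have e: "\<Union>(path_image ` C) = frontier (Hs vA vB vC)" .
    have "unit_disk \<inter> frontier P = unit_disk \<inter> frontier (Hs vA vB vC)"
      unfolding True PT0_def using front_open[OF opn] by (simp add: unit_disk_def)
    thus ?thesis using sm lf e by blast
  next
    case False
    then obtain v where v: "v \<in> tri_vertices" "P = capf v" using P by blast
    obtain b c where t: "tri3 v b c" using tri_v[OF v(1)] by blast
    have bc: "b \<noteq> c"
    proof
      assume "b = c"
      hence "b \<bullet> c = 1" using tri3_self[OF t] by simp
      thus False using t by (simp add: tri3_def)
    qed
    define C where "C = {linepath b c}"
    have sm: "\<forall>g\<in>C. smooth_curve g" using bc by (auto simp: C_def intro!: linepath_smooth)
    have lf: "\<forall>x\<in>unit_disk. \<exists>U. open U \<and> x \<in> U \<and> finite {g\<in>C. path_image g \<inter> U \<noteq> {}}"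
      by (intro ballI exI[of _ UNIV]) (auto simp: C_def)
    have "unit_disk \<inter> frontier P = unit_disk \<inter> frontier {x. v \<bullet> x \<le> -1/2}"
      unfolding v(2) capf_def using front_open[OF opn] by (simp add: unit_disk_def)
    also have "\<dots> = unit_disk \<inter> {x. v \<bullet> x = -1/2}" using tri_nz[OF v(1)] by (simp add: frontier_halfspace_le)
    also have "\<dots> = unit_disk \<inter> closed_segment b c"
      using tri3_chord[OF t] tri3_seg[OF t] by (auto simp: unit_disk_def)
    also have "\<dots> = unit_disk \<inter> \<Union>(path_image ` C)" by (simp add: C_def)
    finally show ?thesis using sm lf by blast
  qed
qed

lemma td_diam: "\<forall>P\<in>triangle_decomposition. diameter P = sqrt 3"
proof
  fix P assume "P \<in> triangle_decomposition"
  hence P: "P = PT0 \<or> (\<exists>v\<in>tri_vertices. P = capf v)" by (auto simp: td_eq)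
  have bdd: "bounded P" using P by (auto simp: PT0_def capf_def intro: bounded_subset[OF bounded_ball])
  have d0: "0 \<le> diameter P" using bdd by (rule diameter_ge_0)
  show "diameter P = sqrt 3"
  proof (cases "P = PT0")
    case True
    have t1: "tri3 vA vB vC" by (rule tri3_ABC)
    have up: "diameter P \<le> sqrt 3"
    proof (rule diameter_le)
      show "P \<noteq> {} \<or> 0 \<le> sqrt 3" by simp
      fix x y assume xy: "x \<in> P" "y \<in> P"
      hence "x \<in> convex hull {vA, vB, vC}" "y \<in> convex hull {vA, vB, vC}"
        using True tri3_conv[OF t1] by (auto simp: PT0_def)
      then obtain u w where uw: "u \<in> {vA, vB, vC}" "w \<in> {vA, vB, vC}" "norm (x - y) \<le> norm (u - w)"
        using simplex_extremal_le[of "{vA, vB, vC}"] by blast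
      have "norm (u - w) \<le> sqrt 3"
      proof (cases "u = w")
        case True then show ?thesis by simp
      next
        case False
        then obtain c where "tri3 u w c" using tri_vw uw by (auto simp: tri_vertices_eq)
        thus ?thesis using tri3_dist_ab by simp
      qed
      thus "norm (x - y) \<le> sqrt 3" using uw by linarith
    qed
    have "sqrt 3 \<le> diameter P"
    proof (rule diam_ge_lemma[OF d0])
      fix t :: real assume tt: "0 < t" "t < 1/2"
      have q1: "(1 - t) *\<^sub>R vB + t *\<^sub>R vC \<in> P"
        using chord_pt[OF t1, of t] tt tri3_seg[OF t1] True by (auto simp: PT0_def)
      have q2: "t *\<^sub>R vB + (1 - t) *\<^sub>R vC \<in> P"
        using chord_pt[OF t1, of "1 - t"] tt tri3_seg[OF t1] True by (auto simp: PT0_def)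
      have "dist ((1 - t) *\<^sub>R vB + t *\<^sub>R vC) (t *\<^sub>R vB + (1 - t) *\<^sub>R vC) \<le> diameter P"
        by (rule diameter_bounded_bound[OF bdd q1 q2])
      thus "(1 - 2 * t) * sqrt 3 \<le> diameter P" using chord_dist[OF t1, of t] tt by simp
    qed
    thus ?thesis using up by simp
  next
    case False
    then obtain v where v: "v \<in> tri_vertices" "P = capf v" using P by blast
    obtain b c where t: "tri3 v b c" using tri_v[OF v(1)] by blast
    have nv: "norm v = 1" using t by (simp add: tri3_def)
    have up: "diameter P \<le> sqrt 3"
    proof (rule diameter_le)
      show "P \<noteq> {} \<or> 0 \<le> sqrt 3" by simp
      fix x y assume xy: "x \<in> P" "y \<in> P"
      hence "norm x \<le> 1" "v \<bullet> x \<le> -1/2" "norm y \<le> 1" "v \<bullet> y \<le> -1/2" using v by (auto simp: capf_def)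
      hence "dist x y \<le> sqrt 3" using cap_dist[OF nv] by blast
      thus "norm (x - y) \<le> sqrt 3" by (simp add: dist_norm)
    qed
    have "sqrt 3 \<le> diameter P"
    proof (rule diam_ge_lemma[OF d0])
      fix t :: real assume tt: "0 < t" "t < 1/2"
      have q1: "(1 - t) *\<^sub>R b + t *\<^sub>R c \<in> P"
        using chord_pt[OF t, of t] tt v by (auto simp: capf_def)
      have q2: "t *\<^sub>R b + (1 - t) *\<^sub>R c \<in> P"
        using chord_pt[OF t, of "1 - t"] tt v by (auto simp: capf_def)
      have "dist ((1 - t) *\<^sub>R b + t *\<^sub>R c) (t *\<^sub>R b + (1 - t) *\<^sub>R c) \<le> diameter P"
        by (rule diameter_bounded_bound[OF bdd q1 q2])
      thus "(1 - 2 * t) * sqrt 3 \<le> diameter P" using chord_dist[OF t, of t] tt by simp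
    qed
    thus ?thesis using up by simp
  qed
qed




definition det2 :: "real^2 \<Rightarrow> real^2 \<Rightarrow> real" where
  "det2 a b = a$1 * b$2 - a$2 * b$1"

lemma det2_zero_both:
  assumes "det2 p v = 0" "p \<bullet> v = 0" "p \<noteq> 0"
  shows "v = 0"
proof -
  have a: "p$1 * v$2 = p$2 * v$1" "p$1 * v$1 = - (p$2 * v$2)"
    using assms(1,2) by (auto simp: det2_def inner_vec_def sum_2)
  have pp: "p$1^2 + p$2^2 \<noteq> 0"
  proof
    assume "p$1^2 + p$2^2 = 0"
    hence "p$1 = 0" "p$2 = 0" by (smt (verit) power2_less_eq_zero_iff zero_le_power2)+
    hence "p = 0" by (simp add: vec_eq_iff forall_2)
    with assms(3) show False by simp
  qed
  have "(p$1^2 + p$2^2) * v$1 = p$1 * (p$1 * v$1) + p$2 * (p$2 * v$1)"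
    by (simp add: power2_eq_square algebra_simps)
  also have "\<dots> = p$1 * (- (p$2 * v$2)) + p$2 * (p$1 * v$2)" using a by simp
  also have "\<dots> = 0" by (simp add: algebra_simps)
  finally have "(p$1^2 + p$2^2) * v$1 = 0" .
  hence 1: "v$1 = 0" by (metis pp mult_eq_0_iff)
  have "(p$1^2 + p$2^2) * v$2 = p$1 * (p$1 * v$2) + p$2 * (p$2 * v$2)"
    by (simp add: power2_eq_square algebra_simps)
  also have "\<dots> = p$1 * (p$2 * v$1) + p$2 * (- (p$1 * v$1))" using a by (simp add: algebra_simps)
  also have "\<dots> = 0" by (simp add: algebra_simps)
  finally have "(p$1^2 + p$2^2) * v$2 = 0" .
  hence 2: "v$2 = 0" by (metis pp mult_eq_0_iff)
  show ?thesis using 1 2 by (simp add: vec_eq_iff forall_2)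
qed

lemma generic_point:
  fixes p :: "real^2"
  assumes "p \<noteq> 0" "\<delta> > 0" "finite V" "0 \<notin> V"
  shows "\<exists>q\<in>ball p \<delta>. q \<noteq> 0 \<and> (\<forall>v\<in>V. det2 q v \<noteq> 0)"
proof -
  define e :: "real^2" where "e = vector [-(p$2), p$1]"
  have ep: "e \<bullet> p = 0" by (simp add: e_def inner_vec_def sum_2)
  have ne: "norm e = norm p" by (simp add: e_def norm_vec_def L2_set_def sum_2 power2_eq_square add.commute)
  hence ne0: "norm e > 0" using assms(1) by simp
  define bad where "bad = (\<lambda>v. - det2 p v / det2 e v) ` V"
  have fb: "finite bad" using assms(3) by (simp add: bad_def)
  have "infinite {0<..<\<delta> / norm e}" using assms(2) ne0 by simp
  then obtain s where s: "s \<in> {0<..<\<delta> / norm e}" "s \<notin> bad"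
    using fb by (metis finite_subset subsetI)
  define q where "q = p + s *\<^sub>R e"
  have "dist p q = s * norm e" using s by (simp add: q_def dist_norm)
  also have "\<dots> < \<delta>" using s ne0 by (simp add: field_simps)
  finally have qb: "q \<in> ball p \<delta>" by simp
  have "q \<bullet> p = p \<bullet> p" using ep by (simp add: q_def inner_add_left inner_add_right inner_commute)
  hence q0: "q \<noteq> 0" using assms(1) by auto
  have "det2 q v \<noteq> 0" if v: "v \<in> V" for v
  proof
    assume h: "det2 q v = 0"
    have lin: "det2 q v = det2 p v + s * det2 e v" by (simp add: q_def det2_def algebra_simps)
    show False
    proof (cases "det2 e v = 0")
      case True
      hence "det2 p v = 0" using h lin by simp
      moreover have "p \<bullet> v = 0"
        using True by (simp add: det2_def e_def inner_vec_def sum_2)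
      ultimately have "v = 0" using det2_zero_both assms(1) by blast
      thus False using v assms(4) by simp
    next
      case False
      hence "s = - det2 p v / det2 e v" using h lin by (simp add: field_simps)
      hence "s \<in> bad" using v by (simp add: bad_def)
      thus False using s by simp
    qed
  qed
  thus ?thesis using qb q0 by blast
qed

lemma det2_swap: "det2 a b = - det2 b a" by (simp add: det2_def)

lemma generic_choice:
  assumes "finite F" "\<forall>X\<in>F. p X \<noteq> 0 \<and> d X > 0"
  shows "\<exists>c. \<forall>X\<in>F. c X \<in> ball (p X) (d X) \<and> c X \<noteq> 0 \<and> (\<forall>Y\<in>F. Y \<noteq> X \<longrightarrow> det2 (c X) (c Y) \<noteq> 0)"
  using assms
proof (induction F rule: finite_induct)
  case empty
  then show ?case by simp
next
  case (insert X F)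
  then obtain c where c: "\<forall>Y\<in>F. c Y \<in> ball (p Y) (d Y) \<and> c Y \<noteq> 0 \<and> (\<forall>Z\<in>F. Z \<noteq> Y \<longrightarrow> det2 (c Y) (c Z) \<noteq> 0)"
    by auto
  have "finite (c ` F)" "0 \<notin> c ` F" using insert.hyps c by auto
  then obtain q where q: "q \<in> ball (p X) (d X)" "q \<noteq> 0" "\<forall>v\<in>c ` F. det2 q v \<noteq> 0"
    using generic_point[of "p X" "d X" "c ` F"] insert.prems by auto
  define c' where "c' = c(X := q)"
  have "\<forall>Y\<in>insert X F. c' Y \<in> ball (p Y) (d Y) \<and> c' Y \<noteq> 0 \<and> (\<forall>Z\<in>insert X F. Z \<noteq> Y \<longrightarrow> det2 (c' Y) (c' Z) \<noteq> 0)"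
  proof (intro ballI conjI impI)
    fix Y assume Y: "Y \<in> insert X F"
    show "c' Y \<in> ball (p Y) (d Y)" "c' Y \<noteq> 0" using Y c q insert.hyps by (auto simp: c'_def)
    fix Z assume Z: "Z \<in> insert X F" "Z \<noteq> Y"
    show "det2 (c' Y) (c' Z) \<noteq> 0"
    proof (cases "Y = X")
      case True
      then show ?thesis using Z q insert.hyps by (auto simp: c'_def)
    next
      case False
      show ?thesis
      proof (cases "Z = X")
        case True
        then show ?thesis using False Y q insert.hyps det2_swap[of "c Y" q] by (auto simp: c'_def)
      next
        case False2: False
        then show ?thesis using False Y Z c insert.hyps by (auto simp: c'_def)
      qed
    qed
  qed
  then show ?case by blast
qed

lemma open_half:
  fixes X :: "(real^2) set"
  assumes r: "r > 0" and X: "compact X" and c: "\<forall>x\<in>X. norm x = r \<longrightarrow> x \<bullet> c < 0"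
  shows "\<exists>c0 \<delta>. c0 \<noteq> 0 \<and> \<delta> > 0 \<and> (\<forall>c'\<in>ball c0 \<delta>. \<forall>x\<in>X. norm x = r \<longrightarrow> x \<bullet> c' < 0)"
proof (cases "X \<inter> sphere 0 r = {}")
  case True
  have "(axis 1 1 :: real^2) \<noteq> 0" by (simp add: axis_eq_0_iff)
  then show ?thesis using True by (intro exI[of _ "axis 1 1"] exI[of _ 1]) auto
next
  case False
  have cS: "compact (X \<inter> sphere 0 r)" using X by (simp add: compact_Int_closed)
  have "continuous_on (X \<inter> sphere 0 r) (\<lambda>x. x \<bullet> c)" by (intro continuous_intros)
  then obtain x0 where x0: "x0 \<in> X \<inter> sphere 0 r" "\<forall>y\<in>X \<inter> sphere 0 r. y \<bullet> c \<le> x0 \<bullet> c"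
    using continuous_attains_sup[OF cS False] by blast
  define m where "m = x0 \<bullet> c"
  have m: "m < 0" using x0 c by (auto simp: m_def)
  hence c0: "c \<noteq> 0" using m_def by auto
  show ?thesis
  proof (intro exI[of _ c] exI[of _ "-m/r"] conjI c0 ballI impI)
    show "0 < - m / r" using m r by (simp add: divide_neg_pos)
    fix c' x assume c': "c' \<in> ball c (- m / r)" and x: "x \<in> X" "norm x = r"
    have "x \<bullet> c' = x \<bullet> c + x \<bullet> (c' - c)" by (simp add: inner_diff_right)
    also have "x \<bullet> (c' - c) \<le> norm x * norm (c' - c)" by (rule norm_cauchy_schwarz)
    also have "norm (c' - c) < - m / r" using c' by (simp add: dist_norm norm_minus_commute)
    hence "norm x * norm (c' - c) < r * (- m / r)" using x r by (simp only: mult_strict_left_mono)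
    also have "r * (-m/r) = -m" using r by simp
    finally have "x \<bullet> c' < x \<bullet> c - m" by simp
    moreover have "x \<bullet> c \<le> m" using x0 x by (auto simp: m_def)
    ultimately show "x \<bullet> c' < 0" by simp
  qed
qed

lemma finite_min_pos:
  assumes "finite A" "\<forall>a\<in>A. (g a :: real) > 0"
  shows "\<exists>e>0. \<forall>a\<in>A. e \<le> g a"
proof -
  define e where "e = Min (insert 1 (g ` A))"
  have "e > 0" using assms by (simp add: e_def)
  moreover have "\<forall>a\<in>A. e \<le> g a" using assms by (simp add: e_def)
  ultimately show ?thesis by blast
qed

lemma lebesgue_core:
  fixes r :: real and XX :: "(real^2) set set"
  assumes r: "r > 0" and fin: "finite XX"
  and cpt: "\<And>X. X \<in> XX \<Longrightarrow> compact X" and ne: "\<And>X. X \<in> XX \<Longrightarrow> X \<noteq> {}"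
  and cov: "cball 0 r \<subseteq> \<Union>XX"
  and three: "\<And>x X Y Z. x \<in> cball 0 r \<Longrightarrow> X \<in> XX \<Longrightarrow> Y \<in> XX \<Longrightarrow> Z \<in> XX \<Longrightarrow>
      X \<noteq> Y \<Longrightarrow> X \<noteq> Z \<Longrightarrow> Y \<noteq> Z \<Longrightarrow> x \<in> X \<Longrightarrow> x \<in> Y \<Longrightarrow> x \<in> Z \<Longrightarrow> False"
  and half: "\<And>X. X \<in> XX \<Longrightarrow> \<exists>c. \<forall>x\<in>X. norm x = r \<longrightarrow> x \<bullet> c < 0"
  shows False
proof -
  define K :: "(real^2) set" where "K = cball 0 r"
  have "\<forall>X\<in>XX. \<exists>c0 \<delta>. c0 \<noteq> 0 \<and> \<delta> > 0 \<and> (\<forall>c'\<in>ball c0 \<delta>. \<forall>x\<in>X. norm x = r \<longrightarrow> x \<bullet> c' < 0)"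
  proof
    fix X assume X: "X \<in> XX"
    obtain cc where "\<forall>x\<in>X. norm x = r \<longrightarrow> x \<bullet> cc < 0" using half[OF X] by blast
    then show "\<exists>c0 \<delta>. c0 \<noteq> 0 \<and> \<delta> > 0 \<and> (\<forall>c'\<in>ball c0 \<delta>. \<forall>x\<in>X. norm x = r \<longrightarrow> x \<bullet> c' < 0)"
      by (rule open_half[OF r cpt[OF X]])
  qed
  from bchoice[OF this] obtain c0 where "\<forall>X\<in>XX. \<exists>\<delta>. c0 X \<noteq> 0 \<and> \<delta> > 0 \<and> (\<forall>c'\<in>ball (c0 X) \<delta>. \<forall>x\<in>X. norm x = r \<longrightarrow> x \<bullet> c' < 0)"
    by blast
  from bchoice[OF this] obtain \<delta> where c0: "\<forall>X\<in>XX. c0 X \<noteq> 0 \<and> \<delta> X > 0 \<and> (\<forall>c'\<in>ball (c0 X) (\<delta> X). \<forall>x\<in>X. norm x = r \<longrightarrow> x \<bullet> c' < 0)"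
    by blast
  obtain c where c: "\<forall>X\<in>XX. c X \<in> ball (c0 X) (\<delta> X) \<and> c X \<noteq> 0 \<and> (\<forall>Y\<in>XX. Y \<noteq> X \<longrightarrow> det2 (c X) (c Y) \<noteq> 0)"
  proof -
    have pre: "\<forall>X\<in>XX. c0 X \<noteq> 0 \<and> 0 < \<delta> X" using c0 by blast
    show ?thesis using generic_choice[OF fin pre] that by blast
  qed
  have chalf: "\<forall>X\<in>XX. \<forall>x\<in>X. norm x = r \<longrightarrow> x \<bullet> c X < 0" using c c0 by blast
  have "\<forall>X\<in>XX. \<exists>\<eta>>0. \<forall>x\<in>X. \<forall>z\<in>{z\<in>sphere 0 r. z \<bullet> c X \<ge> 0}. \<eta> \<le> dist x z"
  proof
    fix X assume X: "X \<in> XX"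
    have eqs: "{z\<in>sphere 0 r. z \<bullet> c X \<ge> 0} = sphere 0 r \<inter> {z. c X \<bullet> z \<ge> 0}"
      by (auto simp: inner_commute)
    have "closed {z\<in>sphere 0 r. z \<bullet> c X \<ge> 0}"
      unfolding eqs by (intro closed_Int closed_sphere closed_halfspace_ge)
    moreover have "X \<inter> {z\<in>sphere 0 r. z \<bullet> c X \<ge> 0} = {}" using chalf X by fastforce
    ultimately show "\<exists>\<eta>>0. \<forall>x\<in>X. \<forall>z\<in>{z\<in>sphere 0 r. z \<bullet> c X \<ge> 0}. \<eta> \<le> dist x z"
      using separate_compact_closed[OF cpt[OF X]] by blast
  qed
  from bchoice[OF this] obtain \<eta> where \<eta>: "\<forall>X\<in>XX. \<eta> X > 0 \<and> (\<forall>x\<in>X. \<forall>z\<in>{z\<in>sphere 0 r. z \<bullet> c X \<ge> 0}. \<eta> X \<le> dist x z)"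
    by blast
  define TT where "TT = {(X,Y,Z). X \<in> XX \<and> Y \<in> XX \<and> Z \<in> XX \<and> X \<noteq> Y \<and> X \<noteq> Z \<and> Y \<noteq> Z}"
  have fTT: "finite TT"
    by (rule finite_subset[of _ "XX \<times> XX \<times> XX"]) (auto simp: TT_def fin)
  define g :: "(real^2) set \<times> (real^2) set \<times> (real^2) set \<Rightarrow> real^2 \<Rightarrow> real"
    where "g = (\<lambda>(X,Y,Z) x. max (infdist x X) (max (infdist x Y) (infdist x Z)))"
  have "\<forall>t\<in>TT. \<exists>\<tau>>0. \<forall>x\<in>K. \<tau> \<le> g t x"
  proof
    fix t assume t: "t \<in> TT"
    then obtain X Y Z where t': "t = (X,Y,Z)" "X \<in> XX" "Y \<in> XX" "Z \<in> XX" "X \<noteq> Y" "X \<noteq> Z" "Y \<noteq> Z"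
      by (auto simp: TT_def)
    have "continuous_on K (g t)" unfolding g_def t' by (auto intro!: continuous_intros)
    moreover have "compact K" "K \<noteq> {}" using r by (auto simp: K_def)
    ultimately obtain x0 where x0: "x0 \<in> K" "\<forall>y\<in>K. g t x0 \<le> g t y"
      using continuous_attains_inf by blast
    have "g t x0 > 0"
    proof (rule ccontr)
      assume ng: "\<not> g t x0 > 0"
      have le: "infdist x0 X \<le> g t x0" "infdist x0 Y \<le> g t x0" "infdist x0 Z \<le> g t x0"
        by (auto simp: g_def t')
      have "infdist x0 X = 0" "infdist x0 Y = 0" "infdist x0 Z = 0"
        using le ng infdist_nonneg[of x0 X] infdist_nonneg[of x0 Y] infdist_nonneg[of x0 Z] by linarith+
      hence "x0 \<in> X" "x0 \<in> Y" "x0 \<in> Z"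
        using in_closed_iff_infdist_zero[OF compact_imp_closed[OF cpt[OF t'(2)]] ne[OF t'(2)]]
          in_closed_iff_infdist_zero[OF compact_imp_closed[OF cpt[OF t'(3)]] ne[OF t'(3)]]
          in_closed_iff_infdist_zero[OF compact_imp_closed[OF cpt[OF t'(4)]] ne[OF t'(4)]] by simp_all
      moreover have "x0 \<in> cball 0 r" using x0 by (simp add: K_def)
      ultimately show False using three[of x0 X Y Z] t' by blast
    qed
    thus "\<exists>\<tau>>0. \<forall>x\<in>K. \<tau> \<le> g t x" using x0 by blast
  qed
  from bchoice[OF this] obtain \<tau> where \<tau>: "\<forall>t\<in>TT. \<tau> t > 0 \<and> (\<forall>x\<in>K. \<tau> t \<le> g t x)" by blast
  obtain \<epsilon>1 where \<epsilon>1: "\<epsilon>1 > 0" "\<forall>a\<in>XX. \<epsilon>1 \<le> \<eta> a"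
    using finite_min_pos[of XX \<eta>] fin \<eta> by auto
  obtain \<epsilon>2 where \<epsilon>2: "\<epsilon>2 > 0" "\<forall>a\<in>TT. \<epsilon>2 \<le> \<tau> a"
    using finite_min_pos[of TT \<tau>] fTT \<tau> by auto
  define \<epsilon> where "\<epsilon> = min \<epsilon>1 \<epsilon>2"
  have \<epsilon>: "\<epsilon> > 0" using \<epsilon>1 \<epsilon>2 by (simp add: \<epsilon>_def)
  have \<epsilon>\<eta>: "\<And>X. X \<in> XX \<Longrightarrow> \<epsilon> \<le> \<eta> X" using \<epsilon>1 by (force simp: \<epsilon>_def)
  have \<epsilon>\<tau>: "\<And>t. t \<in> TT \<Longrightarrow> \<epsilon> \<le> \<tau> t" using \<epsilon>2 by (force simp: \<epsilon>_def)
  define w :: "(real^2) set \<Rightarrow> real^2 \<Rightarrow> real" where "w = (\<lambda>X x. max 0 (\<epsilon> - infdist x X))"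
  define y where "y = (\<lambda>x. \<Sum>X\<in>XX. w X x *\<^sub>R c X)"
  have noth: "False" if "x \<in> K" "X \<in> XX" "Y \<in> XX" "Z \<in> XX" "X \<noteq> Y" "X \<noteq> Z" "Y \<noteq> Z"
      "infdist x X < \<epsilon>" "infdist x Y < \<epsilon>" "infdist x Z < \<epsilon>" for x X Y Z
  proof -
    have "(X,Y,Z) \<in> TT" using that by (simp add: TT_def)
    hence "\<tau> (X,Y,Z) \<le> g (X,Y,Z) x" using \<tau> that(1) by blast
    hence "\<epsilon> \<le> g (X,Y,Z) x" using \<epsilon>\<tau>[OF \<open>(X,Y,Z) \<in> TT\<close>] by linarith
    thus False using that by (simp add: g_def)
  qed
  have ynz: "y x \<noteq> 0" if x: "x \<in> K" for x
  proof -
    obtain X0 where X0: "X0 \<in> XX" "x \<in> X0" using cov x by (auto simp: K_def)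
    have w0: "w X0 x = \<epsilon>" using X0 \<epsilon> by (simp add: w_def)
    show ?thesis
    proof (cases "\<exists>Y\<in>XX. Y \<noteq> X0 \<and> infdist x Y < \<epsilon>")
      case True
      then obtain Y where Y: "Y \<in> XX" "Y \<noteq> X0" "infdist x Y < \<epsilon>" by blast
      have "y x = (\<Sum>Z\<in>{X0,Y}. w Z x *\<^sub>R c Z)" unfolding y_def
      proof (rule sum.mono_neutral_right[OF fin])
        show "{X0, Y} \<subseteq> XX" using X0 Y by auto
        show "\<forall>i\<in>XX - {X0, Y}. w i x *\<^sub>R c i = 0"
        proof
          fix Z assume Z: "Z \<in> XX - {X0, Y}"
          have "\<not> infdist x Z < \<epsilon>"
            using noth[of x X0 Y Z] x X0 Y Z \<epsilon> by auto
          thus "w Z x *\<^sub>R c Z = 0" by (simp add: w_def)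
        qed
      qed
      also have "\<dots> = \<epsilon> *\<^sub>R c X0 + w Y x *\<^sub>R c Y" using Y w0 by simp
      finally have yx: "y x = \<epsilon> *\<^sub>R c X0 + w Y x *\<^sub>R c Y" .
      have wY: "w Y x > 0" using Y by (simp add: w_def)
      have "det2 (c X0) (y x) = w Y x * det2 (c X0) (c Y)"
        by (simp add: yx det2_def algebra_simps)
      moreover have "det2 (c X0) (c Y) \<noteq> 0" using c X0 Y by blast
      ultimately have "det2 (c X0) (y x) \<noteq> 0" using wY by simp
      thus ?thesis by (auto simp: det2_def)
    next
      case False
      have "y x = (\<Sum>Z\<in>{X0}. w Z x *\<^sub>R c Z)" unfolding y_def
        by (rule sum.mono_neutral_right[OF fin]) (use X0 False in \<open>auto simp: w_def\<close>)
      also have "\<dots> = \<epsilon> *\<^sub>R c X0" using w0 by simp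
      finally show ?thesis using \<epsilon> c X0 by simp
    qed
  qed
  define f where "f = (\<lambda>x. (r / norm (y x)) *\<^sub>R y x)"
  have conty: "continuous_on K y" unfolding y_def w_def
    by (intro continuous_intros)
  have contf: "continuous_on K f" unfolding f_def
    using conty ynz by (intro continuous_intros) auto
  have fK: "f \<in> K \<rightarrow> K" using ynz r by (auto simp: f_def K_def)
  obtain x where x: "x \<in> K" "f x = x"
    using brouwer[of K f] contf fK r by (auto simp: K_def)
  have "norm (f x) = r" using ynz[OF x(1)] r by (simp add: f_def)
  hence nx: "norm x = r" using x(2) by simp
  have "x \<bullet> y x = (r / norm (y x)) * (y x \<bullet> y x)"
    by (subst (1) x(2)[symmetric]) (simp add: f_def)
  also have "\<dots> = r * norm (y x)"
    using ynz[OF x(1)] by (simp add: power2_norm_eq_inner[symmetric] power2_eq_square)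
  finally have pos: "x \<bullet> y x > 0" using r ynz[OF x(1)] by simp
  have "x \<bullet> y x = (\<Sum>X\<in>XX. w X x * (x \<bullet> c X))" by (simp add: y_def inner_sum_right)
  also have "\<dots> \<le> 0"
  proof (rule sum_nonpos)
    fix X assume X: "X \<in> XX"
    show "w X x * (x \<bullet> c X) \<le> 0"
    proof (cases "infdist x X < \<epsilon>")
      case True
      have "x \<bullet> c X < 0"
      proof (rule ccontr)
        assume "\<not> x \<bullet> c X < 0"
        hence xz: "x \<in> {z\<in>sphere 0 r. z \<bullet> c X \<ge> 0}" using nx by simp
        obtain a where a: "a \<in> X" "infdist x X = dist x a"
          using infdist_attains_inf[OF compact_imp_closed[OF cpt[OF X]] ne[OF X]] by blast
        have "\<eta> X \<le> dist a x" using \<eta> X a xz by blast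
        thus False using True a \<epsilon>\<eta>[OF X] by (simp add: dist_commute)
      qed
      moreover have "w X x \<ge> 0" by (simp add: w_def)
      ultimately show ?thesis by (simp add: mult_nonneg_nonpos)
    next
      case False
      then show ?thesis by (simp add: w_def)
    qed
  qed
  finally show False using pos by simp
qed

lemma trace_half:
  fixes S :: "(real^2) set"
  assumes r: "r > 0" and S: "compact S" and M: "0 \<le> M" "M < sqrt 3 * r"
    and d: "\<forall>x\<in>S. \<forall>y\<in>S. norm x = r \<longrightarrow> norm y = r \<longrightarrow> dist x y \<le> M"
  shows "\<exists>c. \<forall>x\<in>S. norm x = r \<longrightarrow> x \<bullet> c < 0"
proof -
  define T where "T = S \<inter> sphere 0 r"
  have cT: "compact T" using S by (simp add: T_def compact_Int_closed)
  have "0 \<notin> convex hull T"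
  proof
    assume "0 \<in> convex hull T"
    hence "0 \<in> {x::real^2. \<exists>S. finite S \<and> S \<subseteq> T \<and> card S \<le> DIM(real^2) + 1 \<and> x \<in> convex hull S}"
      by (subst caratheodory[symmetric])
    then obtain s where s: "finite s" "s \<subseteq> T" "card s \<le> 3" "0 \<in> convex hull s"
      by auto
    then obtain u where u: "\<forall>x\<in>s. 0 \<le> u x" "sum u s = 1" "(\<Sum>x\<in>s. u x *\<^sub>R x) = 0"
      using convex_hull_finite[OF s(1)] by auto
    define C where "C = r^2 - M^2/2"
    have ip: "x \<bullet> y \<ge> C + (if x = y then M^2/2 else 0)" if "x \<in> s" "y \<in> s" for x y
    proof (cases "x = y")
      case True
      have "norm x = r" using that s(2) by (auto simp: T_def)
      hence "x \<bullet> x = r^2" by (simp add: power2_norm_eq_inner[symmetric])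
      thus ?thesis using True by (simp add: C_def)
    next
      case False
      have nx: "norm x = r" "norm y = r" using that s(2) by (auto simp: T_def)
      have "dist x y \<le> M" using d nx that s(2) by (auto simp: T_def)
      hence "(dist x y)^2 \<le> M^2" by (simp add: power_mono)
      moreover have "(dist x y)^2 = (norm x)^2 + (norm y)^2 - 2 * (x \<bullet> y)"
        by (simp add: dist_norm power2_norm_eq_inner inner_diff_left inner_diff_right inner_commute)
      ultimately have "x \<bullet> y \<ge> C" using nx by (simp add: C_def)
      thus ?thesis using False by simp
    qed
    have "0 = (\<Sum>x\<in>s. u x *\<^sub>R x) \<bullet> (\<Sum>y\<in>s. u y *\<^sub>R y)" using u by simp
    also have "\<dots> = (\<Sum>x\<in>s. \<Sum>y\<in>s. u x * u y * (x \<bullet> y))"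
      by (simp add: inner_sum_left inner_sum_right sum_distrib_left mult.assoc)
         (subst sum.swap, simp add: inner_commute mult.left_commute)
    also have "\<dots> \<ge> (\<Sum>x\<in>s. \<Sum>y\<in>s. u x * u y * (C + (if x = y then M^2/2 else 0)))"
      by (intro sum_mono mult_left_mono ip) (auto simp: u)
    finally have ineq: "(\<Sum>x\<in>s. \<Sum>y\<in>s. u x * u y * (C + (if x = y then M^2/2 else 0))) \<le> 0" .
    have "(\<Sum>x\<in>s. \<Sum>y\<in>s. u x * u y * (C + (if x = y then M^2/2 else 0)))
        = (\<Sum>x\<in>s. \<Sum>y\<in>s. u x * u y * C) + (\<Sum>x\<in>s. \<Sum>y\<in>s. (if x = y then u x * u y * (M^2/2) else 0))"
      by (simp add: sum.distrib[symmetric] distrib_left) (intro sum.cong refl, simp)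
    also have "(\<Sum>x\<in>s. \<Sum>y\<in>s. u x * u y * C) = C"
      using u(2) by (simp add: sum_distrib_left[symmetric] sum_distrib_right[symmetric] mult.assoc)
    also have "(\<Sum>x\<in>s. \<Sum>y\<in>s. (if x = y then u x * u y * (M^2/2) else 0)) = (\<Sum>x\<in>s. (u x)^2 * (M^2/2))"
      using s(1) by (simp add: power2_eq_square)
    finally have eq: "C + (\<Sum>x\<in>s. (u x)^2 * (M^2/2)) \<le> 0" using ineq by simp
    have "(sum u s)^2 \<le> (\<Sum>x\<in>s. (u x)^2) * real (card s)" by (rule sum_squared_le_sum_of_squares)
    moreover have "(\<Sum>x\<in>s. (u x)^2) * real (card s) \<le> (\<Sum>x\<in>s. (u x)^2) * 3"
      using s(3) by (intro mult_left_mono) (auto intro: sum_nonneg)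
    ultimately have "1 \<le> (\<Sum>x\<in>s. (u x)^2) * 3" using u(2) by simp
    hence A: "M^2 * 1 \<le> M^2 * ((\<Sum>x\<in>s. (u x)^2) * 3)" by (intro mult_left_mono) auto
    have "(\<Sum>x\<in>s. (u x)^2 * (M^2/2)) = (\<Sum>x\<in>s. (u x)^2) * (M^2/2)"
      by (rule sum_distrib_right[symmetric])
    also have "\<dots> = (M^2 * ((\<Sum>x\<in>s. (u x)^2) * 3)) / 6" by simp
    finally have B: "(\<Sum>x\<in>s. (u x)^2 * (M^2/2)) = (M^2 * ((\<Sum>x\<in>s. (u x)^2) * 3)) / 6" .
    have sq: "(\<Sum>x\<in>s. (u x)^2 * (M^2/2)) \<ge> M^2/6" unfolding B using A by linarith
    have "M^2 < (sqrt 3 * r)^2" using power_strict_mono[OF M(2) M(1), of 2] by simp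
    hence "M^2 < 3 * r^2" by (simp add: power_mult_distrib)
    thus False using eq sq unfolding C_def by linarith
  qed
  then obtain a b where ab: "a \<noteq> 0" "0 < b" "\<forall>x\<in>convex hull T. inner a x > b"
    using separating_hyperplane_closed_0[of "convex hull T"] cT
    by (auto simp: compact_convex_hull compact_imp_closed)
  show ?thesis
  proof (intro exI[of _ "-a"] ballI impI)
    fix x assume "x \<in> S" "norm x = r"
    hence "x \<in> convex hull T" by (auto simp: T_def intro: hull_inc)
    hence "a \<bullet> x > b" using ab by blast
    thus "x \<bullet> (-a) < 0" using ab by (simp add: inner_commute)
  qed
qed



lemma line_split:
  fixes S :: "(real^2) set"
  assumes S: "compact S" and far: "\<forall>x\<in>S. norm x > \<rho>" and \<rho>: "\<rho> \<ge> 0"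
    and d: "\<forall>x\<in>S. \<forall>y\<in>S. dist x y < 2 * \<rho>"
  shows "\<exists>n. \<forall>x\<in>S. x \<bullet> n \<noteq> 0"
proof -
  have nz: "\<forall>x\<in>S. x \<noteq> 0" using far \<rho> by force
  define A where "A = (\<lambda>x. x /\<^sub>R norm x) ` S"
  define B where "B = uminus ` A"
  have cA: "compact A" unfolding A_def
    by (rule compact_continuous_image[OF _ S]) (use nz in \<open>auto intro!: continuous_intros\<close>)
  have cB: "compact B" unfolding B_def by (rule compact_continuous_image[OF _ cA]) (auto intro!: continuous_intros)
  have AB: "A \<inter> B = {}"
  proof (rule ccontr)
    assume "A \<inter> B \<noteq> {}"
    then obtain x y where xy: "x \<in> S" "y \<in> S" "x /\<^sub>R norm x = - (y /\<^sub>R norm y)"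
      by (auto simp: A_def B_def)
    have nx: "norm x > 0" "norm y > 0" using nz xy by auto
    have "y = - (norm y) *\<^sub>R (x /\<^sub>R norm x)" using xy(3) nx by simp
    hence yeq: "y = - ((norm y / norm x) *\<^sub>R x)" by (simp add: divide_inverse)
    have "x - y = x + (norm y / norm x) *\<^sub>R x" by (subst yeq) simp
    also have "\<dots> = (1 + norm y / norm x) *\<^sub>R x" by (simp add: scaleR_add_left)
    finally have "x - y = (1 + norm y / norm x) *\<^sub>R x" .
    hence "dist x y = (1 + norm y / norm x) * norm x" using nx by (simp add: dist_norm)
    also have "\<dots> = norm x + norm y" using nx by (simp add: field_simps)
    finally have dd: "dist x y = norm x + norm y" .
    have "norm x > \<rho>" "norm y > \<rho>" using far xy by auto
    hence "dist x y > 2 * \<rho>" using dd by linarith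
    thus False using d xy by fastforce
  qed
  have sub: "A \<subseteq> sphere 0 1" "B \<subseteq> sphere 0 1" using nz by (auto simp: A_def B_def)
  show ?thesis
  proof (cases "S = {}")
    case True then show ?thesis by simp
  next
    case False
    hence neA: "A \<noteq> {}" "B \<noteq> {}" by (auto simp: A_def B_def)
    have "\<exists>m\<in>sphere (0::real^2) 1. m \<notin> A \<and> m \<notin> B"
    proof (rule ccontr)
      assume "\<not> ?thesis"
      hence "sphere 0 1 \<subseteq> A \<union> B" by blast
      moreover have "connected (sphere (0::real^2) 1)" by (rule connected_sphere) simp
      moreover have "closed A" "closed B" using cA cB by (auto intro: compact_imp_closed)
      moreover have "A \<inter> sphere 0 1 \<noteq> {}" "B \<inter> sphere 0 1 \<noteq> {}" using sub neA by blast+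
      moreover have "A \<inter> B \<inter> sphere 0 1 = {}" using AB by blast
      ultimately show False unfolding connected_closed by blast
    qed
    then obtain m where m: "norm m = 1" "m \<notin> A" "m \<notin> B" by auto
    define n :: "real^2" where "n = vector [-(m$2), m$1]"
    have m1: "m$1^2 + m$2^2 = 1" using m(1) by (simp add: norm_vec_def L2_set_def sum_2)
    show ?thesis
    proof (intro exI[of _ n] ballI notI)
      fix x assume x: "x \<in> S" "x \<bullet> n = 0"
      have e: "x$2 * m$1 = x$1 * m$2" using x(2) by (simp add: n_def inner_vec_def sum_2)
      have xe: "x = (x \<bullet> m) *\<^sub>R m"
      proof -
        have "x$1 = (x$1 * m$1 + x$2 * m$2) * m$1"
        proof -
          have "(x$1 * m$1 + x$2 * m$2) * m$1 = x$1 * m$1^2 + (x$2 * m$1) * m$2" by (simp add: algebra_simps power2_eq_square)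
          also have "\<dots> = x$1 * m$1^2 + (x$1 * m$2) * m$2" using e by simp
          also have "\<dots> = x$1 * (m$1^2 + m$2^2)" by (simp add: algebra_simps power2_eq_square)
          finally show ?thesis using m1 by simp
        qed
        moreover have "x$2 = (x$1 * m$1 + x$2 * m$2) * m$2"
        proof -
          have "(x$1 * m$1 + x$2 * m$2) * m$2 = (x$1 * m$2) * m$1 + x$2 * m$2^2" by (simp add: algebra_simps power2_eq_square)
          also have "\<dots> = (x$2 * m$1) * m$1 + x$2 * m$2^2" using e by simp
          also have "\<dots> = x$2 * (m$1^2 + m$2^2)" by (simp add: algebra_simps power2_eq_square)
          finally show ?thesis using m1 by simp
        qed
        ultimately show ?thesis by (simp add: vec_eq_iff forall_2 inner_vec_def sum_2)
      qed
      define t where "t = x \<bullet> m"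
      have xe': "x = t *\<^sub>R m" unfolding t_def by (rule xe)
      have nxm: "norm x = \<bar>t\<bar>" using m(1) by (simp add: xe')
      have x0: "x \<noteq> 0" using nz x by auto
      have t0: "t \<noteq> 0" using x0 xe' by auto
      show False
      proof (cases "t > 0")
        case True
        have "x /\<^sub>R norm x = m" using True nxm xe' by simp
        hence "m \<in> A" unfolding A_def by (rule image_eqI[where x=x and f="\<lambda>x. x /\<^sub>R norm x", OF sym x(1)])
        thus False using m by simp
      next
        case False
        hence neg: "t < 0" using t0 by linarith
        have eq: "x /\<^sub>R norm x = - m" using neg nxm xe' by simp
        have "- m \<in> A" unfolding A_def by (rule image_eqI[where x=x and f="\<lambda>x. x /\<^sub>R norm x", OF eq[symmetric] x(1)])
        hence "m \<in> B" unfolding B_def by (rule image_eqI[rotated]) simp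
        thus False using m by simp
      qed
    qed
  qed
qed


lemma locfin_compact:
  fixes D K :: "(real^2) set" and PP :: "(real^2) set set"
  assumes lf: "\<forall>x\<in>D. \<exists>U. open U \<and> x \<in> U \<and> finite {P\<in>PP. P \<inter> U \<noteq> {}}"
    and K: "compact K" "K \<subseteq> D"
  shows "finite {P\<in>PP. P \<inter> K \<noteq> {}}"
proof -
  from bchoice[OF lf] obtain U where U: "\<forall>x\<in>D. open (U x) \<and> x \<in> U x \<and> finite {P\<in>PP. P \<inter> U x \<noteq> {}}"
    by blast
  have opn: "\<And>x. x \<in> K \<Longrightarrow> open (U x)" using U K(2) by blast
  have "K \<subseteq> (\<Union>x\<in>K. U x)" using U K(2) by blast
  then obtain F where F: "F \<subseteq> K" "finite F" "K \<subseteq> (\<Union>x\<in>F. U x)"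
    using compactE_image[OF K(1), of K U] opn by blast
  have "{P\<in>PP. P \<inter> K \<noteq> {}} \<subseteq> (\<Union>x\<in>F. {P\<in>PP. P \<inter> U x \<noteq> {}})" using F(3) by blast
  moreover have "finite (\<Union>x\<in>F. {P\<in>PP. P \<inter> U x \<noteq> {}})"
  proof (rule finite_UN_I[OF F(2)])
    fix x assume "x \<in> F"
    thus "finite {P\<in>PP. P \<inter> U x \<noteq> {}}" using U F(1) K(2) by blast
  qed
  ultimately show ?thesis by (rule finite_subset)
qed

lemma lower_bound:
  fixes PP :: "(real^2) set set"
  assumes dec: "decomposition unit_disk PP" and two: "at_most_two_meet unit_disk PP"
  shows "\<exists>P\<in>PP. diameter P \<ge> sqrt 3"
proof (rule ccontr)
  assume "\<not> ?thesis"
  hence small: "\<And>P. P \<in> PP \<Longrightarrow> diameter P < sqrt 3" by (auto simp: not_le)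
  define D :: "(real^2) set" where "D = ball 0 1"
  note decs = dec[unfolded decomposition_def unit_disk_def, folded D_def]
  have cl: "\<forall>P\<in>PP. closedin (top_of_set D) P" by (rule decs[THEN conjunct1])
  have un: "\<Union>PP = D" by (rule decs[THEN conjunct2, THEN conjunct2, THEN conjunct1])
  have lf: "\<forall>x\<in>D. \<exists>U. open U \<and> x \<in> U \<and> finite {P\<in>PP. P \<inter> U \<noteq> {}}"
    by (rule decs[THEN conjunct2, THEN conjunct2, THEN conjunct2])
  have sub: "\<And>P. P \<in> PP \<Longrightarrow> P \<subseteq> D" using un by blast
  have bdd: "\<And>P. P \<in> PP \<Longrightarrow> bounded P"
    using sub bounded_subset[OF bounded_ball] unfolding D_def by blast
  have dist_le: "\<And>P x y. P \<in> PP \<Longrightarrow> x \<in> P \<Longrightarrow> y \<in> P \<Longrightarrow> dist x y \<le> diameter P"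
    using bdd diameter_bounded_bound by blast
  have no3: "\<And>x P Q R. x \<in> D \<Longrightarrow> P \<in> PP \<Longrightarrow> Q \<in> PP \<Longrightarrow> R \<in> PP \<Longrightarrow> P \<noteq> Q \<Longrightarrow> P \<noteq> R \<Longrightarrow> Q \<noteq> R
      \<Longrightarrow> x \<in> P \<Longrightarrow> x \<in> Q \<Longrightarrow> x \<in> R \<Longrightarrow> False"
    using two unfolding at_most_two_meet_def D_def unit_disk_def by blast
  define \<rho> :: real where "\<rho> = 9/10"
  define PA where "PA = {P\<in>PP. P \<inter> cball 0 \<rho> \<noteq> {}}"
  have "cball (0::real^2) \<rho> \<subseteq> D" by (auto simp: D_def \<rho>_def)
  hence fPA: "finite PA" unfolding PA_def by (intro locfin_compact[OF lf]) auto
  define M where "M = Max (insert 0 (diameter ` PA))"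
  have M0: "0 \<le> M" using fPA by (simp add: M_def)
  have Mlt: "M < sqrt 3" unfolding M_def using fPA small by (auto simp: PA_def)
  have dPA: "\<And>P. P \<in> PA \<Longrightarrow> diameter P \<le> M" using fPA by (simp add: M_def)
  define mm where "mm = max \<rho> (M / sqrt 3)"
  define r where "r = (1 + mm) / 2"
  have Ms: "M / sqrt 3 < 1" using Mlt by simp
  have mx: "\<rho> \<le> mm" "M / sqrt 3 \<le> mm" "mm < 1"
    using Ms by (auto simp: \<rho>_def mm_def)
  have "\<rho> < 1" by (simp add: \<rho>_def)
  have mmr: "mm < r" unfolding r_def using mx by (simp add: field_simps)
  have r1a: "\<rho> < r" using mx(1) mmr by (rule le_less_trans)
  have r1b: "r < 1" unfolding r_def using mx by (simp add: field_simps)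
  have r1c: "M / sqrt 3 < r" using mx(2) mmr by (rule le_less_trans)
  note r1 = r1a r1b r1c
  have r0: "0 < r" using r1 by (simp add: \<rho>_def)
  have rM: "M < sqrt 3 * r" using r1(3) by (simp add: field_simps)
  define K :: "(real^2) set" where "K = cball 0 r"
  have KD: "K \<subseteq> D" using r1 by (auto simp: K_def D_def)
  define PK where "PK = {P\<in>PP. P \<inter> K \<noteq> {}}"
  have fPK: "finite PK" unfolding PK_def by (rule locfin_compact[OF lf]) (simp_all add: KD, simp add: K_def)
  have cpt: "compact (P \<inter> K)" if P: "P \<in> PP" for P
  proof -
    obtain T where T: "closed T" "P = D \<inter> T" using cl P by (auto simp: closedin_closed)
    have "P \<inter> K = K \<inter> T" using T KD by blast
    thus ?thesis using T by (simp add: K_def compact_Int_closed)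
  qed
  have s3: "sqrt 3 < 2 * \<rho>" unfolding \<rho>_def by (rule real_less_lsqrt) (simp_all add: power2_eq_square)
  have "\<forall>P\<in>PK - PA. \<exists>n. \<forall>x\<in>P \<inter> K. x \<bullet> n \<noteq> 0"
  proof
    fix P assume P: "P \<in> PK - PA"
    hence PPP: "P \<in> PP" and far0: "P \<inter> cball 0 \<rho> = {}" by (auto simp: PK_def PA_def)
    show "\<exists>n. \<forall>x\<in>P \<inter> K. x \<bullet> n \<noteq> 0"
    proof (rule line_split[OF cpt[OF PPP]])
      show "\<forall>x\<in>P \<inter> K. norm x > \<rho>" using far0 by (force simp: not_le)
      show "\<rho> \<ge> 0" by (simp add: \<rho>_def)
      show "\<forall>x\<in>P \<inter> K. \<forall>y\<in>P \<inter> K. dist x y < 2 * \<rho>"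
      proof (intro ballI)
        fix x y assume "x \<in> P \<inter> K" "y \<in> P \<inter> K"
        hence "dist x y \<le> diameter P" using dist_le[OF PPP] by blast
        thus "dist x y < 2 * \<rho>" using small[OF PPP] s3 by linarith
      qed
    qed
  qed
  from bchoice[OF this] obtain nv where nv: "\<forall>P\<in>PK - PA. \<forall>x\<in>P \<inter> K. x \<bullet> nv P \<noteq> 0" by blast
  define parts where "parts = (\<lambda>P. if P \<in> PA then {P \<inter> K}
      else {P \<inter> K \<inter> {x. inner (nv P) x \<ge> 0}, P \<inter> K \<inter> {x. inner (nv P) x \<le> 0}})"
  define XX where "XX = {X \<in> (\<Union>P\<in>PK. parts P). X \<noteq> {}}"
  have finparts: "finite (parts P)" for P by (simp add: parts_def)
  have finXX: "finite XX" unfolding XX_def using fPK finparts by auto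
  have partsub: "X \<subseteq> P \<inter> K" if "X \<in> parts P" for X P using that by (auto simp: parts_def split: if_splits)
  have cptXX: "compact X" if XXm: "X \<in> XX" for X
  proof -
    obtain P where P: "P \<in> PK" "X \<in> parts P" using XXm unfolding XX_def by blast
    have PP: "P \<in> PP" using P by (simp add: PK_def)
    show ?thesis
    proof (cases "P \<in> PA")
      case True
      then show ?thesis using P cpt[OF PP] by (simp add: parts_def)
    next
      case False
      have "X = P \<inter> K \<inter> {x. inner (nv P) x \<ge> 0} \<or> X = P \<inter> K \<inter> {x. inner (nv P) x \<le> 0}"
        using P False by (simp add: parts_def)
      then show ?thesis
        by (elim disjE) (simp_all add: compact_Int_closed cpt[OF PP] closed_halfspace_ge closed_halfspace_le)
    qed
  qed
  have neXX: "X \<noteq> {}" if "X \<in> XX" for X using that by (simp add: XX_def)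
  have cov: "cball 0 r \<subseteq> \<Union>XX"
  proof
    fix x :: "real^2" assume x: "x \<in> cball 0 r"
    hence xD: "x \<in> D" using KD by (auto simp: K_def)
    then obtain P where P: "P \<in> PP" "x \<in> P" using un by blast
    have PK: "P \<in> PK" using P x by (auto simp: PK_def K_def)
    show "x \<in> \<Union>XX"
    proof (cases "P \<in> PA")
      case True
      hence "P \<inter> K \<in> XX" using PK P x by (auto simp: XX_def parts_def K_def)
      moreover have "x \<in> P \<inter> K" using P x by (simp add: K_def)
      ultimately show ?thesis by blast
    next
      case False
      show ?thesis
      proof (cases "inner (nv P) x \<ge> 0")
        case True
        hence "P \<inter> K \<inter> {x. inner (nv P) x \<ge> 0} \<in> XX" using PK P x False
          by (auto simp: XX_def parts_def K_def intro!: bexI[of _ P])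
        moreover have "x \<in> P \<inter> K \<inter> {x. inner (nv P) x \<ge> 0}" using P x True by (simp add: K_def)
        ultimately show ?thesis by blast
      next
        case False2: False
        hence "P \<inter> K \<inter> {x. inner (nv P) x \<le> 0} \<in> XX" using PK P x False
          by (auto simp: XX_def parts_def K_def intro!: bexI[of _ P])
        moreover have "x \<in> P \<inter> K \<inter> {x. inner (nv P) x \<le> 0}" using P x False2 by (simp add: K_def)
        ultimately show ?thesis by blast
      qed
    qed
  qed
  have samepiece: "False" if "P \<in> PK" "X \<in> parts P" "Y \<in> parts P" "X \<noteq> Y" "x \<in> X" "x \<in> Y" for P X Y x
  proof (cases "P \<in> PA")
    case True
    then show ?thesis using that by (simp add: parts_def)
  next
    case False
    hence "P \<in> PK - PA" using that by simp
    have "x \<in> P \<inter> K \<inter> {x. inner (nv P) x \<ge> 0}" "x \<in> P \<inter> K \<inter> {x. inner (nv P) x \<le> 0}"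
      using that False by (auto simp: parts_def)
    hence "x \<in> P \<inter> K" "inner (nv P) x = 0" by auto
    thus False using nv \<open>P \<in> PK - PA\<close> by (auto simp: inner_commute)
  qed
  have three: False if h: "x \<in> cball 0 r" "X \<in> XX" "Y \<in> XX" "Z \<in> XX" "X \<noteq> Y" "X \<noteq> Z" "Y \<noteq> Z"
      "x \<in> X" "x \<in> Y" "x \<in> Z" for x X Y Z
  proof -
    obtain PX where PX: "PX \<in> PK" "X \<in> parts PX" using h(2) unfolding XX_def by blast
    obtain PY where PY: "PY \<in> PK" "Y \<in> parts PY" using h(3) unfolding XX_def by blast
    obtain PZ where PZ: "PZ \<in> PK" "Z \<in> parts PZ" using h(4) unfolding XX_def by blast
    have "PX \<noteq> PY" using samepiece[of PX X Y x] PX PY h by blast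
    moreover have "PX \<noteq> PZ" using samepiece[of PX X Z x] PX PZ h by blast
    moreover have "PY \<noteq> PZ" using samepiece[of PY Y Z x] PY PZ h by blast
    moreover have "x \<in> PX" using partsub[OF PX(2)] h(8) by blast
    moreover have "x \<in> PY" using partsub[OF PY(2)] h(9) by blast
    moreover have "x \<in> PZ" using partsub[OF PZ(2)] h(10) by blast
    moreover have "PX \<in> PP" "PY \<in> PP" "PZ \<in> PP" using PX PY PZ by (auto simp: PK_def)
    moreover have "x \<in> D" using h(1) KD by (auto simp: K_def)
    ultimately show False using no3 by metis
  qed
  have half: "\<exists>c. \<forall>x\<in>X. norm x = r \<longrightarrow> x \<bullet> c < 0" if X: "X \<in> XX" for X
  proof -
    obtain P where P: "P \<in> PK" "X \<in> parts P" using X unfolding XX_def by blast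
    have PP: "P \<in> PP" using P by (simp add: PK_def)
    show ?thesis
    proof (cases "P \<in> PA")
      case True
      hence XP: "X = P \<inter> K" using P by (simp add: parts_def)
      show ?thesis unfolding XP
      proof (rule trace_half[OF r0 cpt[OF PP] M0 rM])
        show "\<forall>x\<in>P \<inter> K. \<forall>y\<in>P \<inter> K. norm x = r \<longrightarrow> norm y = r \<longrightarrow> dist x y \<le> M"
        proof (intro ballI impI)
          fix x y assume "x \<in> P \<inter> K" "y \<in> P \<inter> K"
          hence "dist x y \<le> diameter P" using dist_le[OF PP] by blast
          thus "dist x y \<le> M" using dPA[OF True] by linarith
        qed
      qed
    next
      case False
      hence PA': "P \<in> PK - PA" using P by simp
      have "X = P \<inter> K \<inter> {x. inner (nv P) x \<ge> 0} \<or> X = P \<inter> K \<inter> {x. inner (nv P) x \<le> 0}"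
        using P False by (simp add: parts_def)
      then show ?thesis
      proof
        assume XA: "X = P \<inter> K \<inter> {x. inner (nv P) x \<ge> 0}"
        show ?thesis
        proof (intro exI[of _ "- nv P"] ballI impI)
          fix x assume "x \<in> X"
          hence "x \<in> P \<inter> K" "inner (nv P) x \<ge> 0" using XA by auto
          moreover have "x \<bullet> nv P \<noteq> 0" using nv PA' \<open>x \<in> P \<inter> K\<close> by blast
          ultimately show "x \<bullet> - nv P < 0" by (simp add: inner_commute)
        qed
      next
        assume XB: "X = P \<inter> K \<inter> {x. inner (nv P) x \<le> 0}"
        show ?thesis
        proof (intro exI[of _ "nv P"] ballI impI)
          fix x assume "x \<in> X"
          hence "x \<in> P \<inter> K" "inner (nv P) x \<le> 0" using XB by auto
          moreover have "x \<bullet> nv P \<noteq> 0" using nv PA' \<open>x \<in> P \<inter> K\<close> by blast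
          ultimately show "x \<bullet> nv P < 0" by (simp add: inner_commute)
        qed
      qed
    qed
  qed
  show False
    by (rule lebesgue_core[OF r0 finXX cptXX neXX cov three half])
qed


theorem proposition2p5:
  shows "smooth_decomposition unit_disk triangle_decomposition \<and>
         at_most_two_meet unit_disk triangle_decomposition \<and>
         (\<forall>P\<in>triangle_decomposition. diameter P = sqrt 3) \<and>
         (\<forall>\<P>. smooth_decomposition unit_disk \<P> \<and> at_most_two_meet unit_disk \<P> \<longrightarrow>
              (\<exists>P\<in>\<P>. diameter P \<ge> sqrt 3))"
  using td_smooth td_two td_diam lower_bound by (auto simp: smooth_decomposition_def)

end
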